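(* Let $D$ be a Lagrangian diagram obtained by applying Ng's resolution to a front diagram of a Legendrian knot. Then the flooding algorithm applied to the area inequalities of $D$ succeeds, i.e. it assigns every crossing of $D$ to a tier.
   Context: Front diagram: projection $(x,y,z)\mapsto(x,z)$ of a Legendrian knot in $(\mathbb{R}^3,dz-y\,dx)$. Ng's resolution (Ng, "Computable Legendrian invariants") converts a front diagram into a Lagrangian diagram of a Legendrian isotopic knot, each front crossing becoming a crossing and each right cusp becoming a crossing bounding a small loop. For a Lagrangian diagram, an area patch is a bounded complementary region; traversing its boundary with the boundary orientation, a corner where one passes from an understrand to an overstrand has positive Reeb sign, otherwise negative. The area inequality of a patch says the Reeb-sign-weighted sum of the heights $h(q)$ of its corners is $>0$; the collection of these is $\mathcal{R}$, with $f_i:\sum_j\alpha_{i,j}h(q_j)>0$. Flooding algorithm: start with $\mathcal{R}'=\mathcal{R}$, $k=1$. (i) Let $T_k$ be the set of not-yet-assigned crossings $q_j$ with $\alpha_{i,j}\ge0$ for all $f_i\in\mathcal{R}'$. (ii) If $T_k=\emptyset$, the algorithm fails; otherwise remove from $\mathcal{R}'$ every $f_i$ having $\alpha_{i,j}>0$ for some $q_j\in T_k$. (iii) If $\mathcal{R}'\neq\emptyset$ increase $k$ and repeat; if $\mathcal{R}'=\emptyset$, put all remaining crossings in a final tier $T_{k+1}$ and the algorithm succeeds. *)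

theory Defs
  imports Main
begin

text \<open>A generic front diagram of a Legendrian knot, read from left to right (increasing x),
is a word of elementary events. Between consecutive events we have a vertical slab in which
the strands are numbered 0,1,... from bottom to top (increasing z). Slab k is the slab after
the first k events.
  LCusp i : a left cusp creating two new strands, at positions i and i+1 of the next slab;
  RCusp i : strands i and i+1 meet in a right cusp and disappear;
  Cross i : strands i and i+1 cross.\<close>

datatype front_event = LCusp nat | RCusp nat | Cross nat

fun cnt_step :: "front_event \<Rightarrow> nat \<Rightarrow> nat" where
  "cnt_step (LCusp i) n = n + 2"
| "cnt_step (RCusp i) n = n - 2"
| "cnt_step (Cross i) n = n"

definition strands :: "front_event list \<Rightarrow> nat \<Rightarrow> nat" where
  "strands w k = foldl (\<lambda>n e. cnt_step e n) 0 (take k w)"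

fun event_ok :: "front_event \<Rightarrow> nat \<Rightarrow> bool" where
  "event_ok (LCusp i) n = (i \<le> n)"
| "event_ok (RCusp i) n = (i + 1 < n)"
| "event_ok (Cross i) n = (i + 1 < n)"

definition front_word :: "front_event list \<Rightarrow> bool" where
  "front_word w \<longleftrightarrow> w \<noteq> [] \<and> (\<forall>e < length w. event_ok (w ! e) (strands w e))
                    \<and> strands w (length w) = 0"

text \<open>Connectivity of strands: strand j of slab e continues to strand j' of slab e+1.\<close>
fun strand_cont :: "front_event \<Rightarrow> nat \<Rightarrow> nat \<Rightarrow> bool" where
  "strand_cont (Cross i) j j' = (if j = i then j' = i + 1 else if j = i + 1 then j' = i else j' = j)"
| "strand_cont (LCusp i) j j' = (j' = (if j < i then j else j + 2))"
| "strand_cont (RCusp i) j j' = ((j < i \<and> j' = j) \<or> (i + 2 \<le> j \<and> j' = j - 2))"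

definition strand_nodes :: "front_event list \<Rightarrow> (nat \<times> nat) set" where
  "strand_nodes w = {(k, j). k \<le> length w \<and> j < strands w k}"

definition strand_adj :: "front_event list \<Rightarrow> nat \<times> nat \<Rightarrow> nat \<times> nat \<Rightarrow> bool" where
  "strand_adj w a b \<longleftrightarrow>
     (\<exists>e j j'. e < length w \<and> a = (e, j) \<and> b = (Suc e, j') \<and> j < strands w e
        \<and> j' < strands w (Suc e) \<and> strand_cont (w ! e) j j')
   \<or> (\<exists>e i. e < length w \<and> w ! e = LCusp i \<and> a = (Suc e, i) \<and> b = (Suc e, Suc i))
   \<or> (\<exists>e i. e < length w \<and> w ! e = RCusp i \<and> a = (e, i) \<and> b = (e, Suc i))"

definition is_knot :: "front_event list \<Rightarrow> bool" where
  "is_knot w \<longleftrightarrow> (\<forall>a \<in> strand_nodes w. \<forall>b \<in> strand_nodes w.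
                     (\<lambda>x y. strand_adj w x y \<or> strand_adj w y x)\<^sup>*\<^sup>* a b)"

text \<open>Gap g of slab k (0 \<le> g \<le> strands w k) is the part of the slab between strand g-1 and
strand g (gap 0 lies below all strands, the top gap above all strands).
Gap g of slab e continues into gap g' of slab e+1.\<close>
fun gap_cont :: "front_event \<Rightarrow> nat \<Rightarrow> nat \<Rightarrow> bool" where
  "gap_cont (Cross i) g g' = (g \<noteq> i + 1 \<and> g' = g)"
| "gap_cont (LCusp i) g g' =
     (if g < i then g' = g else if g = i then (g' = i \<or> g' = i + 2) else g' = g + 2)"
| "gap_cont (RCusp i) g g' =
     ((g < i \<and> g' = g) \<or> (g = i \<and> g' = i) \<or> (g = i + 2 \<and> g' = i) \<or> (i + 2 < g \<and> g' = g - 2))"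

definition gap_nodes :: "front_event list \<Rightarrow> (nat \<times> nat) set" where
  "gap_nodes w = {(k, g). k \<le> length w \<and> g \<le> strands w k}"

definition gap_adj :: "front_event list \<Rightarrow> nat \<times> nat \<Rightarrow> nat \<times> nat \<Rightarrow> bool" where
  "gap_adj w a b \<longleftrightarrow>
     (\<exists>e g g'. e < length w \<and> a = (e, g) \<and> b = (Suc e, g') \<and> g \<le> strands w e
        \<and> g' \<le> strands w (Suc e) \<and> gap_cont (w ! e) g g')"

definition gap_conn :: "front_event list \<Rightarrow> nat \<times> nat \<Rightarrow> nat \<times> nat \<Rightarrow> bool" where
  "gap_conn w = (\<lambda>x y. gap_adj w x y \<or> gap_adj w y x)\<^sup>*\<^sup>*"

definition region_of :: "front_event list \<Rightarrow> nat \<times> nat \<Rightarrow> (nat \<times> nat) set" where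
  "region_of w a = {b. gap_conn w a b}"

text \<open>Complementary regions of the resolved (Lagrangian) diagram: the regions of the front
(classes of connected gaps), plus one small loop region for every right cusp.\<close>
datatype patch = Region "(nat \<times> nat) set" | Loop nat

text \<open>Area patches = bounded complementary regions: every region except the unbounded one
(which contains gap 0 of slab 0), and all loops.\<close>
definition area_patches :: "front_event list \<Rightarrow> patch set" where
  "area_patches w =
     {Region (region_of w a) | a. a \<in> gap_nodes w \<and> \<not> gap_conn w a (0, 0)}
   \<union> {Loop e | e i. e < length w \<and> w ! e = RCusp i}"

text \<open>Crossings of Ng's resolution: front crossings and right cusps, indexed by event number.\<close>
definition resolved_crossings :: "front_event list \<Rightarrow> nat set" where
  "resolved_crossings w = {e. e < length w \<and> (\<exists>i. w ! e = Cross i \<or> w ! e = RCusp i)}"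

text \<open>The four quadrants (corners) at a crossing of the resolution, with their Reeb signs:
the left and right quadrants are positive, the top and bottom quadrants negative.\<close>
definition corners :: "front_event list \<Rightarrow> nat \<Rightarrow> (patch \<times> int) list" where
  "corners w e = (case w ! e of
      Cross i \<Rightarrow> [(Region (region_of w (e, i + 1)), 1), (Region (region_of w (Suc e, i + 1)), 1),
                 (Region (region_of w (e, i)), -1), (Region (region_of w (e, i + 2)), -1)]
    | RCusp i \<Rightarrow> [(Region (region_of w (e, i + 1)), 1), (Loop e, 1),
                 (Region (region_of w (e, i)), -1), (Region (region_of w (e, i + 2)), -1)]
    | LCusp i \<Rightarrow> [])"

text \<open>Coefficient alpha(f, q) of h(q) in the area inequality of the patch f:
the sum of the Reeb signs of the corners of f at q.\<close>
definition area_coeff :: "front_event list \<Rightarrow> patch \<Rightarrow> nat \<Rightarrow> int" where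
  "area_coeff w f q = sum_list (map snd (filter (\<lambda>c. fst c = f) (corners w q)))"

text \<open>flooding_succeeds alpha U R: the flooding algorithm, run with the set U of not yet
assigned crossings and the current set R of remaining inequalities, succeeds.\<close>
inductive flooding_succeeds :: "('p \<Rightarrow> 'c \<Rightarrow> int) \<Rightarrow> 'c set \<Rightarrow> 'p set \<Rightarrow> bool"
  for \<alpha> :: "'p \<Rightarrow> 'c \<Rightarrow> int" where
  finish: "\<lbrakk> T = {q \<in> U. \<forall>f \<in> R. 0 \<le> \<alpha> f q}; T \<noteq> {};
             {f \<in> R. \<not> (\<exists>q \<in> T. 0 < \<alpha> f q)} = {} \<rbrakk> \<Longrightarrow> flooding_succeeds \<alpha> U R"
| step: "\<lbrakk> T = {q \<in> U. \<forall>f \<in> R. 0 \<le> \<alpha> f q}; T \<noteq> {};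
           R' = {f \<in> R. \<not> (\<exists>q \<in> T. 0 < \<alpha> f q)}; R' \<noteq> {};
           flooding_succeeds \<alpha> (U - T) R' \<rbrakk> \<Longrightarrow> flooding_succeeds \<alpha> U R"

end

theory Submission
  imports Defs
begin

lemma flood_gen:
  fixes \<alpha> :: "'p \<Rightarrow> 'c \<Rightarrow> int" and r :: "'p \<Rightarrow> nat"
  assumes "finite R" "R \<noteq> {}"
    and "\<forall>f\<in>R. \<exists>q\<in>U. 0 < \<alpha> f q \<and> (\<forall>g\<in>R. \<alpha> g q < 0 \<longrightarrow> r f < r g)"
  shows "flooding_succeeds \<alpha> U R"
  using assms
proof (induction "card R" arbitrary: U R rule: less_induct)
  case less
  define m where "m = Max (r ` R)"
  have "m \<in> r ` R" unfolding m_def using less.prems by (intro Max_in) auto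
  then obtain f where f: "f \<in> R" "r f = m" by auto
  have fm: "\<forall>g\<in>R. r g \<le> r f" using f less.prems(1) unfolding m_def by auto
  obtain q where q: "q\<in>U" "0 < \<alpha> f q" "\<forall>g\<in>R. \<alpha> g q < 0 \<longrightarrow> r f < r g"
    using less.prems(3) f(1) by blast
  define T where "T = {q \<in> U. \<forall>f \<in> R. 0 \<le> \<alpha> f q}"
  have qT: "q \<in> T" unfolding T_def using q fm by force
  define R' where "R' = {f \<in> R. \<not> (\<exists>q \<in> T. 0 < \<alpha> f q)}"
  have "f \<notin> R'" using qT q unfolding R'_def by auto
  hence psub: "R' \<subset> R" using f unfolding R'_def by auto
  show ?case
  proof (cases "R' = {}")
    case True
    show ?thesis by (rule flooding_succeeds.finish[OF T_def]) (use qT True R'_def in auto)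
  next
    case False
    have "flooding_succeeds \<alpha> (U - T) R'"
    proof (rule less.hyps)
      show "card R' < card R" using psub less.prems(1) by (simp add: psubset_card_mono)
      show "finite R'" using psub less.prems(1) finite_subset by blast
      show "R' \<noteq> {}" by fact
      show "\<forall>f\<in>R'. \<exists>q\<in>U - T. 0 < \<alpha> f q \<and> (\<forall>g\<in>R'. \<alpha> g q < 0 \<longrightarrow> r f < r g)"
      proof
        fix f' assume f': "f' \<in> R'"
        then obtain q' where q': "q'\<in>U" "0 < \<alpha> f' q'" "\<forall>g\<in>R. \<alpha> g q' < 0 \<longrightarrow> r f' < r g"
          using less.prems(3) R'_def by blast
        have "q' \<notin> T" using f' q'(2) unfolding R'_def by auto
        thus "\<exists>q\<in>U - T. 0 < \<alpha> f' q \<and> (\<forall>g\<in>R'. \<alpha> g q < 0 \<longrightarrow> r f' < r g)"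
          using q' psub by blast
      qed
    qed
    show ?thesis by (rule flooding_succeeds.step[OF T_def _ R'_def]) (use qT False \<open>flooding_succeeds \<alpha> (U - T) R'\<close> in auto)
  qed
qed

lemma strands_Suc: "k < length w \<Longrightarrow> strands w (Suc k) = cnt_step (w!k) (strands w k)"
  by (simp add: strands_def take_Suc_conv_app_nth)

lemma gap0_conn: "k \<le> length w \<Longrightarrow> gap_conn w (k,0) (0,0)"
proof (induction k)
  case 0 then show ?case by (simp add: gap_conn_def)
next
  case (Suc k)
  have "gap_cont (w!k) 0 0" by (cases "w!k") auto
  hence "gap_adj w (k,0) (Suc k, 0)" using Suc.prems unfolding gap_adj_def by auto
  hence "gap_conn w (Suc k,0) (k,0)" unfolding gap_conn_def by auto
  with Suc show ?case unfolding gap_conn_def by (meson Suc_leD rtranclp_trans)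
qed

lemma gap_adj_nodes: "gap_adj w x y \<Longrightarrow> x \<in> gap_nodes w \<and> y \<in> gap_nodes w"
  unfolding gap_adj_def gap_nodes_def by auto

lemma region_sub: "a \<in> gap_nodes w \<Longrightarrow> region_of w a \<subseteq> gap_nodes w"
proof
  fix b assume a: "a \<in> gap_nodes w" and "b \<in> region_of w a"
  hence "gap_conn w a b" by (simp add: region_of_def)
  thus "b \<in> gap_nodes w" unfolding gap_conn_def
    by (induction rule: rtranclp_induct) (use a gap_adj_nodes in auto)
qed

lemma finite_gap_nodes: "finite (gap_nodes w)"
proof -
  have "gap_nodes w \<subseteq> Sigma {..length w} (\<lambda>k. {..strands w k})"
    unfolding gap_nodes_def by auto
  thus ?thesis by (rule finite_subset) auto
qed

lemma finite_region: "a \<in> gap_nodes w \<Longrightarrow> finite (region_of w a)"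
  using region_sub finite_gap_nodes finite_subset by blast

lemma gap_conn_sym: "gap_conn w a b \<Longrightarrow> gap_conn w b a"
  unfolding gap_conn_def
proof (induction rule: rtranclp_induct)
  case base then show ?case by simp
next
  case (step y z)
  hence "(\<lambda>x y. gap_adj w x y \<or> gap_adj w y x) z y" by auto
  then show ?case using step.IH by (rule converse_rtranclp_into_rtranclp)
qed

lemma gap_conn_trans: "gap_conn w a b \<Longrightarrow> gap_conn w b c \<Longrightarrow> gap_conn w a c"
  unfolding gap_conn_def by (rule rtranclp_trans)

lemma region_eq: "gap_conn w a b \<Longrightarrow> region_of w a = region_of w b"
  unfolding region_of_def using gap_conn_sym gap_conn_trans by blast

lemma self_region: "a \<in> region_of w a"
  by (simp add: region_of_def gap_conn_def)

lemma adj_region: "gap_adj w a b \<Longrightarrow> b \<in> region_of w a"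
  by (simp add: region_of_def gap_conn_def r_into_rtranclp)

lemma front_ok: "front_word w \<Longrightarrow> e < length w \<Longrightarrow> event_ok (w!e) (strands w e)"
  by (simp add: front_word_def)

lemma next_regions:
  assumes fw: "front_word w" and e: "e < length w" and ev: "w!e = Cross i \<or> w!e = RCusp i"
  shows "(Suc e, i) \<in> region_of w (e,i)" "\<exists>x. (Suc e, x) \<in> region_of w (e, Suc (Suc i))"
    "(e,i) \<in> gap_nodes w" "(e, Suc (Suc i)) \<in> gap_nodes w"
proof -
  have ok: "event_ok (w!e) (strands w e)" using front_ok[OF fw e] .
  have ss: "strands w (Suc e) = cnt_step (w!e) (strands w e)" using strands_Suc[OF e] .
  show "(Suc e, i) \<in> region_of w (e,i)"
    apply (rule adj_region) unfolding gap_adj_def using e ev ok ss by auto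
  show "(e,i) \<in> gap_nodes w" "(e, Suc (Suc i)) \<in> gap_nodes w"
    using e ev ok unfolding gap_nodes_def by auto
  show "\<exists>x. (Suc e, x) \<in> region_of w (e, Suc (Suc i))"
  proof (cases "w!e = Cross i")
    case True
    have "gap_adj w (e, Suc (Suc i)) (Suc e, Suc (Suc i))"
      unfolding gap_adj_def using e True ok ss by auto
    thus ?thesis using adj_region by blast
  next
    case False
    hence R: "w!e = RCusp i" using ev by auto
    have "gap_adj w (e, Suc (Suc i)) (Suc e, i)"
      unfolding gap_adj_def using e R ok ss by auto
    thus ?thesis using adj_region by blast
  qed
qed

lemma neg_corner:
  assumes ev: "w!e = Cross i \<or> w!e = RCusp i" and "area_coeff w g e < 0"
  shows "g = Region (region_of w (e,i)) \<or> g = Region (region_of w (e, Suc (Suc i)))"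
  using assms by (auto simp: area_coeff_def corners_def split: if_splits)

fun rk :: "patch \<Rightarrow> nat" where
  "rk (Region S) = Max (fst ` S)"
| "rk (Loop e) = e"

lemma neg_rank:
  assumes fw: "front_word w" and e: "e < length w" and ev: "w!e = Cross i \<or> w!e = RCusp i"
    and "area_coeff w g e < 0"
  shows "Suc e \<le> rk g"
proof -
  note nr = next_regions[OF fw e ev]
  from neg_corner[OF ev assms(4)] show ?thesis
  proof
    assume g: "g = Region (region_of w (e,i))"
    have "finite (region_of w (e,i))" using finite_region nr(3) by blast
    then show ?thesis using g nr(1) by (auto intro!: Max_ge_iff[THEN iffD2] simp: rev_image_eqI)
  next
    assume g: "g = Region (region_of w (e,Suc (Suc i)))"
    have "finite (region_of w (e,Suc (Suc i)))" using finite_region nr(4) by blast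
    then show ?thesis using g nr(2) by (auto intro!: Max_ge_iff[THEN iffD2] simp: rev_image_eqI)
  qed
qed

lemma cont_exists:
  assumes ok: "event_ok ev n" and g: "g \<le> n"
    and nx: "\<not>(\<exists>i. (ev = Cross i \<or> ev = RCusp i) \<and> g = Suc i)"
  shows "\<exists>g' \<le> cnt_step ev n. gap_cont ev g g'"
proof (cases ev)
  case (LCusp i)
  show ?thesis
  proof (cases "g < i")
    case True then show ?thesis using LCusp g by (intro exI[of _ g]) auto
  next
    case False
    show ?thesis
    proof (cases "g = i")
      case True then show ?thesis using LCusp g by (intro exI[of _ g]) auto
    next
      case False
      then show ?thesis using LCusp g \<open>\<not> g < i\<close> by (intro exI[of _ "g+2"]) auto
    qed
  qed
next
  case (RCusp i)
  have "g \<noteq> Suc i" using nx RCusp by auto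
  have n: "i + 1 < n" using ok RCusp by simp
  consider "g < i" | "g = i" | "g = i + 2" | "i + 2 < g" using \<open>g \<noteq> Suc i\<close> by linarith
  then show ?thesis
  proof cases
    case 1 then show ?thesis using RCusp g n by (intro exI[of _ g]) auto
  next
    case 2 then show ?thesis using RCusp g n by (intro exI[of _ i]) auto
  next
    case 3 then show ?thesis using RCusp g n by (intro exI[of _ i]) auto
  next
    case 4 then show ?thesis using RCusp g n by (intro exI[of _ "g - 2"]) auto
  qed
next
  case (Cross i)
  then show ?thesis using nx g by (intro exI[of _ g]) auto
qed

lemma pos_coeff:
  assumes ev: "w!K = Cross i \<or> w!K = RCusp i"
    and nx: "\<forall>x. (Suc K, x) \<notin> region_of w (K, Suc i)"
    and r1: "(Suc K, i) \<in> region_of w (K,i)"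
    and r2: "(Suc K, x) \<in> region_of w (K, Suc (Suc i))"
  shows "area_coeff w (Region (region_of w (K, Suc i))) K = 1"
proof -
  have a: "region_of w (Suc K, Suc i) \<noteq> region_of w (K, Suc i)"
    using nx self_region by metis
  have b: "region_of w (K, i) \<noteq> region_of w (K, Suc i)" using nx r1 by metis
  have c: "region_of w (K, Suc (Suc i)) \<noteq> region_of w (K, Suc i)" using nx r2 by metis
  show ?thesis using ev by (elim disjE) (simp_all add: area_coeff_def corners_def a b c)
qed

lemma loop_coeff: "w!e = RCusp i \<Longrightarrow> area_coeff w (Loop e) e = 1"
  by (simp add: area_coeff_def corners_def)

lemma patch_good:
  assumes fw: "front_word w" and f: "f \<in> area_patches w"
  shows "\<exists>q\<in>resolved_crossings w. 0 < area_coeff w f q \<and>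
           (\<forall>g\<in>area_patches w. area_coeff w g q < 0 \<longrightarrow> rk f < rk g)"
proof -
  from f consider (R) a where "f = Region (region_of w a)" "a \<in> gap_nodes w" "\<not> gap_conn w a (0,0)"
    | (L) e i where "f = Loop e" "e < length w" "w!e = RCusp i"
    unfolding area_patches_def by blast
  then show ?thesis
  proof cases
  case R
  note fa = R(1) and a = R(2) and nc = R(3)
  define S where "S = region_of w a"
  define K where "K = Max (fst ` S)"
  have finS: "finite S" unfolding S_def by (rule finite_region[OF a])
  have "a \<in> S" unfolding S_def by (rule self_region)
  hence "fst ` S \<noteq> {}" by blast
  hence "K \<in> fst ` S" unfolding K_def using finS by (intro Max_in) simp_all
  then obtain p where p: "p \<in> S" "K = fst p" by blast
  obtain g where gS: "(K, g) \<in> S" using p by (metis prod.collapse)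
  have maxK: "k \<le> K" if "(k, x) \<in> S" for k x
  proof -
    have "k \<in> fst ` S" using that by (metis fst_conv image_eqI)
    thus ?thesis unfolding K_def using finS by simp
  qed
  have gn: "(K, g) \<in> gap_nodes w" using gS region_sub[OF a] S_def by auto
  hence Kl: "K \<le> length w" and gl: "g \<le> strands w K" by (auto simp: gap_nodes_def)
  have acg: "gap_conn w a (K, g)" using gS S_def by (simp add: region_of_def)
  have KL: "K < length w"
  proof (rule ccontr)
    assume "\<not> K < length w"
    hence "K = length w" using Kl by simp
    hence "g = 0" using gl fw by (simp add: front_word_def)
    hence "gap_conn w (K,g) (0,0)" using gap0_conn Kl by simp
    thus False using nc acg gap_conn_trans by blast
  qed
  have ok: "event_ok (w!K) (strands w K)" using front_ok[OF fw KL] .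
  have ss: "strands w (Suc K) = cnt_step (w!K) (strands w K)" using strands_Suc[OF KL] .
  have "\<exists>i. (w!K = Cross i \<or> w!K = RCusp i) \<and> g = Suc i"
  proof (rule ccontr)
    assume "\<not> ?thesis"
    from cont_exists[OF ok gl this] obtain g' where
      g': "g' \<le> cnt_step (w!K) (strands w K)" "gap_cont (w!K) g g'" by blast
    have "gap_adj w (K,g) (Suc K, g')" unfolding gap_adj_def using KL gl g' ss by auto
    hence "gap_conn w a (Suc K, g')" using acg gap_conn_trans
      by (metis adj_region mem_Collect_eq region_of_def)
    hence "(Suc K, g') \<in> S" by (simp add: S_def region_of_def)
    thus False using maxK by fastforce
  qed
  then obtain i where ev: "w!K = Cross i \<or> w!K = RCusp i" and gi: "g = Suc i" by blast
  have SK: "S = region_of w (K, Suc i)" using region_eq[OF acg] S_def gi by simp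
  note nr = next_regions[OF fw KL ev]
  have nx: "\<forall>x. (Suc K, x) \<notin> region_of w (K, Suc i)" using maxK SK by fastforce
  obtain x where x: "(Suc K, x) \<in> region_of w (K, Suc (Suc i))" using nr(2) by blast
  have fK: "f = Region (region_of w (K, Suc i))" using fa S_def SK by simp
  have "K \<in> resolved_crossings w" using KL ev by (auto simp: resolved_crossings_def)
  moreover have "0 < area_coeff w f K" using fK pos_coeff[OF ev nx nr(1) x] by simp
  moreover have "\<forall>g\<in>area_patches w. area_coeff w g K < 0 \<longrightarrow> rk f < rk g"
  proof (intro ballI impI)
    fix g assume "area_coeff w g K < 0"
    from neg_rank[OF fw KL ev this] have "Suc K \<le> rk g" .
    moreover have "rk f = K" using fa S_def K_def by simp
    ultimately show "rk f < rk g" by simp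
  qed
  ultimately show ?thesis by blast
next
  case L
  note fe = L(1) and e = L(2) and ev = L(3)
  have "e \<in> resolved_crossings w" using e ev by (auto simp: resolved_crossings_def)
  moreover have "0 < area_coeff w f e" using fe loop_coeff[OF ev] by simp
  moreover have "\<forall>g\<in>area_patches w. area_coeff w g e < 0 \<longrightarrow> rk f < rk g"
  proof (intro ballI impI)
    fix g assume "area_coeff w g e < 0"
    from neg_rank[OF fw e _ this] ev fe show "rk f < rk g" by auto
  qed
  ultimately show ?thesis by blast
qed
qed

lemma finite_patches: "finite (area_patches w)"
proof -
  have "area_patches w \<subseteq> (\<lambda>a. Region (region_of w a)) ` gap_nodes w \<union> Loop ` {..<length w}"
    unfolding area_patches_def by auto
  moreover have "finite ((\<lambda>a. Region (region_of w a)) ` gap_nodes w \<union> Loop ` {..<length w})"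
    using finite_gap_nodes by simp
  ultimately show ?thesis by (rule finite_subset)
qed

lemma has_rcusp:
  assumes fw: "front_word w"
  shows "\<exists>e i. e < length w \<and> w!e = RCusp i"
proof (rule ccontr)
  assume nr: "\<not> ?thesis"
  have ne: "0 < length w" using fw by (simp add: front_word_def)
  have ok0: "event_ok (w!0) (strands w 0)" using front_ok[OF fw ne] .
  have s0: "strands w 0 = 0" by (simp add: strands_def)
  have "\<exists>i. w!0 = LCusp i" using ok0 s0 by (cases "w!0") auto
  hence s1: "strands w 1 = 2" using strands_Suc[OF ne] s0 by auto
  have "\<And>k. 1 \<le> k \<Longrightarrow> k \<le> length w \<Longrightarrow> 2 \<le> strands w k"
  proof -
    fix k assume "1 \<le> k" "k \<le> length w"
    thus "2 \<le> strands w k"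
    proof (induction k rule: dec_induct)
      case base then show ?case using s1 by simp
    next
      case (step m)
      have ml: "m < length w" using step by simp
      have "strands w m \<le> strands w (Suc m)"
        using strands_Suc[OF ml] nr ml by (cases "w!m") auto
      then show ?case using step by simp
    qed
  qed
  hence "2 \<le> strands w (length w)" using ne by (metis Suc_leI One_nat_def order_refl)
  thus False using fw by (simp add: front_word_def)
qed

theorem mainTheorem7:
  fixes w :: "front_event list"
  assumes "front_word w" and "is_knot w"
  shows "flooding_succeeds (area_coeff w) (resolved_crossings w) (area_patches w)"
proof (rule flood_gen[where r = rk])
  show "finite (area_patches w)" by (rule finite_patches)
  obtain e i where "e < length w" "w!e = RCusp i" using has_rcusp[OF assms(1)] by blast
  thus "area_patches w \<noteq> {}" unfolding area_patches_def by blast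
  show "\<forall>f\<in>area_patches w. \<exists>q\<in>resolved_crossings w. 0 < area_coeff w f q \<and>
      (\<forall>g\<in>area_patches w. area_coeff w g q < 0 \<longrightarrow> rk f < rk g)"
    using patch_good[OF assms(1)] by blast
qed

end
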